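(* Let $\phi=\frac{1+\sqrt5}{2}$ and let $n\ge 2$ be an integer. Let $G$ be a bipartite multigraph consisting of $n$ matchings $M_1,\dots,M_n$ (not necessarily edge-disjoint), each with at least $\phi n+20n/\log n$ edges. Then $G$ contains a rainbow matching with $n$ edges.
   Context: $\log$ denotes the natural logarithm. Each matching $M_i$ is a colour class (colour $i$); if the same pair of vertices is an edge of several $M_i$, these are treated as distinct parallel edges of different colours. A matching is rainbow if it contains at most one edge of each colour. *)

theory Defs
  imports Complex_Main
begin

definition bip_matching :: "'v set \<Rightarrow> 'v set \<Rightarrow> ('v \<times> 'v) set \<Rightarrow> bool" where
  "bip_matching A B M \<longleftrightarrow> M \<subseteq> A \<times> B \<and>
     (\<forall>e\<in>M. \<forall>f\<in>M. e \<noteq> f \<longrightarrow> fst e \<noteq> fst f \<and> snd e \<noteq> snd f)"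

definition rainbow_matching ::
  "nat set \<Rightarrow> (nat \<Rightarrow> ('v \<times> 'v) set) \<Rightarrow> (nat \<times> ('v \<times> 'v)) set \<Rightarrow> bool" where
  "rainbow_matching I M R \<longleftrightarrow>
     (\<forall>(i, e)\<in>R. i \<in> I \<and> e \<in> M i) \<and>
     (\<forall>(i, e)\<in>R. \<forall>(j, f)\<in>R. (i, e) \<noteq> (j, f) \<longrightarrow>
        i \<noteq> j \<and> fst e \<noteq> fst f \<and> snd e \<noteq> snd f)"

definition golden_ratio :: real where
  "golden_ratio = (1 + sqrt 5) / 2"

end

theory Submission
  imports Defs
begin

lemma numeric_big:
  fixes x k L h1 h2 h3 :: real
  assumes x: "x \<ge> 1000" and k: "k \<le> x - 1" and L: "L \<ge> (809/500) * x" and L2: "L \<le> 2 * k"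
    and h1: "h1 \<ge> L - k"
    and s1: "h1 * (L - k - 2) \<le> h2 * (2 * k - L + 2)"
    and s2: "h2 * (L - k - 4) \<le> h3 * (2 * k - L + 3)"
    and h3: "h3 \<le> k"
  shows False
proof -
  define a where "a = L - k"
  define b where "b = 2 * k - L"
  have L': "500 * L \<ge> 809 * x" using L by simp
  have b0: "b \<ge> 0" using L2 unfolding b_def by simp
  have a1': "500 * (a - 4) \<ge> 307 * x" using x k L' unfolding a_def by (simp add: algebra_simps)
  have a1: "a - 4 \<ge> 0.614 * x" using a1' by simp
  have a0: "a - 2 \<ge> 0.614 * x" "a \<ge> 0.614 * x" using a1 by linarith+
  have xp: "0.614 * x \<ge> 0" using x by simp
  have bb': "1000 * (b + 3) \<le> 383 * x" using x k L' unfolding b_def by (simp add: algebra_simps)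
  have bb: "b + 3 \<le> 0.383 * x" "b + 2 \<le> 0.383 * x" using bb' by simp+
  have k0: "k \<ge> 0" using L2 L' x by linarith
  have "h1 * (a - 2) \<le> h2 * (b + 2)" using s1 unfolding a_def b_def by simp
  moreover have "a * (a - 2) \<le> h1 * (a - 2)" using h1 a0 xp unfolding a_def by (intro mult_right_mono) auto
  ultimately have i1: "a * (a - 2) \<le> h2 * (b + 2)" by linarith
  have i2: "h2 * (a - 4) \<le> h3 * (b + 3)" using s2 unfolding a_def b_def by simp
  have "a * (a - 2) * (a - 4) \<le> h2 * (b + 2) * (a - 4)" using i1 a1 xp by (intro mult_right_mono) auto
  also have "\<dots> = (h2 * (a - 4)) * (b + 2)" by (simp add: algebra_simps)
  also have "\<dots> \<le> (h3 * (b + 3)) * (b + 2)" using i2 b0 by (intro mult_right_mono) auto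
  also have "\<dots> = h3 * ((b + 3) * (b + 2))" by (simp add: algebra_simps)
  also have "\<dots> \<le> k * ((b + 3) * (b + 2))" using h3 b0 by (intro mult_right_mono) auto
  also have "\<dots> \<le> x * ((0.383 * x) * (0.383 * x))" using k bb b0 k0 x
    by (intro mult_mono) (auto intro: mult_mono)
  finally have up: "a * (a - 2) * (a - 4) \<le> x * ((0.383 * x) * (0.383 * x))" .
  have "(0.614 * x) * (0.614 * x) * (0.614 * x) \<le> a * (a - 2) * (a - 4)"
    using a0 a1 xp by (intro mult_mono) (auto intro: mult_mono)
  with up have "(0.614 * x) * (0.614 * x) * (0.614 * x) \<le> x * ((0.383 * x) * (0.383 * x))" by linarith
  then have "0.614 * 0.614 * 0.614 * (x * x * x) \<le> 0.383 * 0.383 * (x * x * x)" by (simp add: algebra_simps)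
  moreover have "x * x * x > 0" using x by simp
  ultimately show False by simp
qed

lemma phi_ge: "(1 + sqrt 5) / 2 \<ge> ((809/500)::real)"
proof -
  have "(2.236::real) \<le> sqrt 5" by (rule real_le_rsqrt) (simp add: power2_eq_square)
  then show ?thesis by simp
qed

lemma small_n:
  fixes x :: real assumes "x \<ge> 2" "x < 1000"
  shows "20 * x / ln x \<ge> (7/10) * x"
proof -
  have lp: "ln x > 0" using assms by simp
  have "ln x \<le> ln 1000" using assms by simp
  also have "ln (1000::real) = ln 10 + ln 10 + ln 10"
    using ln_mult[of 10 100] ln_mult[of 10 10] by simp
  also have "ln (10::real) \<le> 9" using ln_le_minus_one[of 10] by simp
  finally have "ln x \<le> 27" by simp
  then have "(7/10) * ln x \<le> 20" by simp
  then have "x * ((7/10) * ln x) \<le> x * 20" using assms by (intro mult_left_mono) auto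
  then have "(7/10) * x * ln x \<le> 20 * x" by (simp add: algebra_simps)
  then show ?thesis using lp by (simp add: field_simps)
qed


lemma rm_inj1: "rainbow_matching I M R \<Longrightarrow> x\<in>R \<Longrightarrow> y\<in>R \<Longrightarrow> fst x = fst y \<Longrightarrow> x = y"
  unfolding rainbow_matching_def by fastforce
lemma rm_inj2: "rainbow_matching I M R \<Longrightarrow> x\<in>R \<Longrightarrow> y\<in>R \<Longrightarrow> fst (snd x) = fst (snd y) \<Longrightarrow> x = y"
  unfolding rainbow_matching_def by fastforce
lemma rm_inj3: "rainbow_matching I M R \<Longrightarrow> x\<in>R \<Longrightarrow> y\<in>R \<Longrightarrow> snd (snd x) = snd (snd y) \<Longrightarrow> x = y"
  unfolding rainbow_matching_def by fastforce
lemma rm_mem: "rainbow_matching I M R \<Longrightarrow> x\<in>R \<Longrightarrow> fst x \<in> I \<and> snd x \<in> M (fst x)"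
  unfolding rainbow_matching_def by fastforce

lemma rm_card:
  assumes "rainbow_matching {1..n} M R"
  shows "finite R \<and> card R \<le> n"
proof -
  have inj: "inj_on fst R" using rm_inj1[OF assms] by (auto simp: inj_on_def)
  have sub: "fst ` R \<subseteq> {1..n}" using rm_mem[OF assms] by auto
  have "finite R" using inj sub finite_imageD finite_subset by blast
  moreover have "card R \<le> n" using card_inj_on_le[OF inj sub] by simp
  ultimately show ?thesis by blast
qed

lemma rm_insert:
  assumes "rainbow_matching I M R" "c \<in> I" "c \<notin> fst ` R" "e \<in> M c"
    "fst e \<notin> fst ` snd ` R" "snd e \<notin> snd ` snd ` R"
  shows "rainbow_matching I M (insert (c,e) R)"
proof -
  have 1: "\<forall>(i, e)\<in>R. i \<in> I \<and> e \<in> M i" and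
       2: "\<forall>(i, e)\<in>R. \<forall>(j, f)\<in>R. (i, e) \<noteq> (j, f) \<longrightarrow> i \<noteq> j \<and> fst e \<noteq> fst f \<and> snd e \<noteq> snd f"
    using assms(1) unfolding rainbow_matching_def by auto
  have 3: "\<forall>(j, f)\<in>R. c \<noteq> j \<and> fst e \<noteq> fst f \<and> snd e \<noteq> snd f"
    using assms(3,5,6) by (auto simp: image_iff)
  show ?thesis unfolding rainbow_matching_def using 1 2 3 assms(2,4) by fastforce
qed

lemma bm_card_snd:
  assumes "bip_matching A B M0" "finite S"
  shows "card {e\<in>M0. snd e \<in> S} \<le> card S"
proof -
  have "inj_on snd {e\<in>M0. snd e \<in> S}" using assms(1) unfolding bip_matching_def inj_on_def by blast
  then show ?thesis by (rule card_inj_on_le) (auto simp: assms(2))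
qed

lemma bm_card_fst:
  assumes "bip_matching A B M0" "finite S"
  shows "card {e\<in>M0. fst e \<in> S} \<le> card S"
proof -
  have "inj_on fst {e\<in>M0. fst e \<in> S}" using assms(1) unfolding bip_matching_def inj_on_def by blast
  then show ?thesis by (rule card_inj_on_le) (auto simp: assms(2))
qed

lemma rm_subset: assumes "rainbow_matching I M R" "S \<subseteq> R" shows "rainbow_matching I M S"
proof -
  have 1: "\<forall>x\<in>R. (case x of (i, e) \<Rightarrow> i \<in> I \<and> e \<in> M i)" and
       2: "\<forall>x\<in>R. \<forall>y\<in>R. (case x of (i, e) \<Rightarrow> case y of (j, f) \<Rightarrow> (i, e) \<noteq> (j, f) \<longrightarrow> i \<noteq> j \<and> fst e \<noteq> fst f \<and> snd e \<noteq> snd f)"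
    using assms(1) unfolding rainbow_matching_def by auto
  have "\<forall>x\<in>S. (case x of (i, e) \<Rightarrow> i \<in> I \<and> e \<in> M i)" using 1 assms(2) by (meson subsetD)
  moreover have "\<forall>x\<in>S. \<forall>y\<in>S. (case x of (i, e) \<Rightarrow> case y of (j, f) \<Rightarrow> (i, e) \<noteq> (j, f) \<longrightarrow> i \<noteq> j \<and> fst e \<noteq> fst f \<and> snd e \<noteq> snd f)"
    using 2 assms(2) by (meson subsetD)
  ultimately show ?thesis unfolding rainbow_matching_def by auto
qed

locale setting =
  fixes n :: nat and M :: "nat \<Rightarrow> ('v\<times>'v) set" and A B :: "'v set"
    and F :: "(nat \<times> ('v\<times>'v)) set" and L :: real
  assumes bm: "\<And>i. i \<in> {1..n} \<Longrightarrow> bip_matching A B (M i)"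
  and fin: "\<And>i. i\<in>{1..n} \<Longrightarrow> finite (M i)"
  and Lb: "\<And>i. i\<in>{1..n} \<Longrightarrow> L \<le> real (card (M i))"
  and Frm: "rainbow_matching {1..n} M F" and Ffin: "finite F"
  and maxF: "\<And>R. rainbow_matching {1..n} M R \<Longrightarrow> finite R \<Longrightarrow> card R \<le> card F"
begin

definition VA where "VA S = fst ` snd ` S"
definition VB where "VB S = snd ` snd ` S"
definition valid where "valid G \<longleftrightarrow> rainbow_matching {1..n} M G \<and> finite G \<and> card G = card F \<and>
   (\<forall>x\<in>G - F. fst (snd x) \<in> VA F \<and> snd (snd x) \<notin> VB F)"
definition XX where "XX G = VB (G - F)"
definition free where "free G c \<longleftrightarrow> c \<in> {1..n} \<and> c \<notin> fst ` G"
definition Succ where "Succ G c = {g \<in> F \<inter> G. \<exists>e\<in>M c. fst e = fst (snd g) \<and> snd e \<notin> VB F \<and> snd e \<notin> XX G}"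
definition H where "H j = {g \<in> F. \<exists>G. valid G \<and> free G (fst g) \<and> card (F - G) \<le> j}"
definition P where "P j = {(h,g). h \<in> F \<and> g \<in> F \<and> (\<exists>G. valid G \<and> free G (fst h) \<and> card (F - G) \<le> j \<and> g \<in> Succ G (fst h))}"

lemma touch:
  assumes "valid G" "free G c" "e \<in> M c"
  shows "fst e \<in> VA G \<or> snd e \<in> VB G"
proof (rule ccontr)
  assume a: "\<not> (fst e \<in> VA G \<or> snd e \<in> VB G)"
  have rm: "rainbow_matching {1..n} M (insert (c,e) G)"
    using rm_insert[of "{1..n}" M G c e] assms a unfolding valid_def free_def VA_def VB_def by auto
  have "(c,e) \<notin> G" using assms(2) unfolding free_def by force
  hence "card (insert (c,e) G) = card F + 1" using assms(1) unfolding valid_def by auto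
  moreover have "finite (insert (c,e) G)" using assms(1) unfolding valid_def by auto
  ultimately show False using maxF[OF rm] by simp
qed

lemma VA_sub: assumes "valid G" shows "VA G \<subseteq> VA F"
proof
  fix a assume "a \<in> VA G" then obtain x where x: "x\<in>G" "a = fst(snd x)" unfolding VA_def by auto
  then show "a \<in> VA F"
  proof (cases "x \<in> F")
    case True then show ?thesis using x unfolding VA_def by auto
  next
    case False then show ?thesis using x assms unfolding valid_def by auto
  qed
qed
lemma VB_sub: assumes "valid G" shows "VB G \<subseteq> VB F \<union> XX G"
proof
  fix a assume "a \<in> VB G" then obtain x where x: "x\<in>G" "a = snd(snd x)" unfolding VB_def by auto
  then show "a \<in> VB F \<union> XX G"
  proof (cases "x \<in> F")
    case True then show ?thesis using x unfolding VB_def by auto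
  next
    case False then show ?thesis using x unfolding XX_def VB_def by auto
  qed
qed
lemma exposed:
  assumes "valid G" "h \<in> F" "h \<notin> G"
  shows "snd (snd h) \<notin> VB G"
proof
  assume "snd (snd h) \<in> VB G"
  then obtain x where x: "x \<in> G" "snd (snd x) = snd (snd h)" unfolding VB_def by auto
  show False
  proof (cases "x \<in> F")
    case True
    then show ?thesis using rm_inj3[OF Frm True assms(2) x(2)] x(1) assms(3) by simp
  next
    case False
    then have "snd (snd x) \<notin> VB F" using assms(1) x(1) unfolding valid_def by auto
    moreover have "snd (snd h) \<in> VB F" using assms(2) unfolding VB_def by auto
    ultimately show ?thesis using x(2) by simp
  qed
qed

lemma XX_card:
  assumes "valid G" shows "card (XX G) \<le> card (F - G)"
proof -
  have fG: "finite G" using assms unfolding valid_def by auto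
  have "card (XX G) \<le> card (snd ` (G - F))" unfolding XX_def VB_def by (rule card_image_le) (use fG in auto)
  also have "\<dots> \<le> card (G - F)" by (rule card_image_le) (use fG in auto)
  also have "\<dots> = card G - card (G \<inter> F)" using fG by (simp add: card_Diff_subset_Int)
  also have "\<dots> = card F - card (F \<inter> G)" using assms unfolding valid_def by (simp add: Int_commute)
  also have "\<dots> = card (F - G)" using Ffin by (simp add: card_Diff_subset_Int)
  finally show ?thesis .
qed

lemma valid_F: "valid F"
  unfolding valid_def using Frm Ffin by auto

lemma fin_VA: "finite (VA S)" if "finite S" for S unfolding VA_def using that by auto
lemma fin_VB: "finite (VB S)" if "finite S" for S unfolding VB_def using that by auto
lemma card_VA: "card (VA S) \<le> card S" if "finite S" for S
  unfolding VA_def using that by (metis card_image_le finite_imageI le_trans)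
lemma card_VB: "card (VB S) \<le> card S" if "finite S" for S
  unfolding VB_def using that by (metis card_image_le finite_imageI le_trans)

lemma ext:
  assumes v: "valid G" and f: "free G c" and g: "g \<in> F" "g \<in> G" and e: "e \<in> M c"
    "fst e = fst (snd g)" "snd e \<notin> VB F" "snd e \<notin> XX G"
  defines "G' \<equiv> insert (c,e) (G - {g})"
  shows "valid G' \<and> free G' (fst g) \<and> F - G' = insert g (F - G)"
proof -
  have rmG: "rainbow_matching {1..n} M G" and fG: "finite G" and cG: "card G = card F"
    using v unfolding valid_def by auto
  have rmG': "rainbow_matching {1..n} M (G - {g})"
    using rmG by (rule rm_subset) auto
  have c1: "c \<in> {1..n}" "c \<notin> fst ` G" using f unfolding free_def by auto
  have a1: "fst e \<notin> VA (G - {g})"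
  proof
    assume "fst e \<in> VA (G - {g})"
    then obtain y where y: "y \<in> snd ` (G - {g})" "fst e = fst y" unfolding VA_def by (rule imageE)
    then obtain x where "x \<in> G - {g}" "fst (snd x) = fst e" by (metis imageE)
    then have "x \<in> G" "x \<noteq> g" "fst (snd x) = fst (snd g)" using e(2) by auto
    then show False using rm_inj2[OF rmG \<open>x \<in> G\<close> g(2)] by simp
  qed
  have a2: "snd e \<notin> VB (G - {g})"
  proof -
    have "VB (G - {g}) \<subseteq> VB G" unfolding VB_def by auto
    then show ?thesis using VB_sub[OF v] e(3,4) by blast
  qed
  have rm': "rainbow_matching {1..n} M G'"
  proof -
    have "c \<notin> fst ` (G - {g})" using c1(2) by blast
    then show ?thesis unfolding G'_def using rm_insert[OF rmG' c1(1) _ e(1)] a1 a2 unfolding VA_def VB_def by blast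
  qed
  have nin: "(c,e) \<notin> G - {g}" using c1(2) by force
  have "card G' = card G" unfolding G'_def using nin fG g(2)
    by (simp add: card.insert_remove) (metis Suc_pred card_gt_0_iff empty_iff)
  have cF: "(c,e) \<notin> F" using e(3) unfolding VB_def by force
  have val: "valid G'"
    unfolding valid_def
  proof (intro conjI)
    show "rainbow_matching {1..n} M G'" by (rule rm')
    show "finite G'" unfolding G'_def using fG by auto
    show "card G' = card F" using \<open>card G' = card G\<close> cG by simp
    show "\<forall>x\<in>G' - F. fst (snd x) \<in> VA F \<and> snd (snd x) \<notin> VB F"
    proof
      fix x assume "x \<in> G' - F"
      then consider "x = (c,e)" | "x \<in> G - F" unfolding G'_def by auto
      then show "fst (snd x) \<in> VA F \<and> snd (snd x) \<notin> VB F"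
      proof cases
        case 1 then show ?thesis using e(2,3) g(1) unfolding VA_def by auto
      next
        case 2 then show ?thesis using v unfolding valid_def by auto
      qed
    qed
  qed
  have gc: "fst g \<in> {1..n}" using rm_mem[OF Frm g(1)] by auto
  have "fst g \<noteq> c" using c1(2) g(2) by auto
  moreover have "fst g \<notin> fst ` (G - {g})" using rm_inj1[OF rmG _ g(2)] by auto
  ultimately have fr: "free G' (fst g)" unfolding free_def G'_def using gc by auto
  have "F - G' = insert g (F - G)" unfolding G'_def using cF g by auto
  then show ?thesis using val fr by blast
qed


lemma count_ext:
  assumes v: "valid G" and f: "free G c" and j: "card (F - G) \<le> j"
  shows "L - real (card F) - 2 * real j \<le> real (card (Succ G c))"
proof -
  have c: "c \<in> {1..n}" using f unfolding free_def by auto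
  have bmc: "bip_matching A B (M c)" and fmc: "finite (M c)" using bm[OF c] fin[OF c] by auto
  have fG: "finite G" using v unfolding valid_def by auto
  define S1 where "S1 = {e\<in>M c. snd e \<in> VB F}"
  define S2 where "S2 = {e\<in>M c. snd e \<in> XX G}"
  define S3 where "S3 = {e\<in>M c. fst e \<in> VA (F - G)}"
  define S4 where "S4 = {e\<in>M c. fst e \<in> VA (Succ G c)}"
  have cov: "M c \<subseteq> S1 \<union> S2 \<union> S3 \<union> S4"
  proof
    fix e assume e: "e \<in> M c"
    show "e \<in> S1 \<union> S2 \<union> S3 \<union> S4"
    proof (cases "snd e \<in> VB F \<or> snd e \<in> XX G")
      case True then show ?thesis using e unfolding S1_def S2_def by auto
    next
      case False
      then have "snd e \<notin> VB G" using VB_sub[OF v] by blast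
      then have "fst e \<in> VA G" using touch[OF v f e] by blast
      then have "fst e \<in> VA F" using VA_sub[OF v] by blast
      then obtain y where y: "y \<in> snd ` F" "fst e = fst y" unfolding VA_def by (rule imageE)
      then obtain g where g: "g \<in> F" "fst e = fst (snd g)" by (metis imageE)
      show ?thesis
      proof (cases "g \<in> G")
        case True
        then have "g \<in> Succ G c" unfolding Succ_def using g e False by auto
        then have "fst e \<in> VA (Succ G c)" unfolding VA_def using g(2) by force
        then show ?thesis using e unfolding S4_def by auto
      next
        case False
        then have "fst e \<in> VA (F - G)" unfolding VA_def using g by force
        then show ?thesis using e unfolding S3_def by auto
      qed
    qed
  qed
  have fS: "finite S1" "finite S2" "finite S3" "finite S4" using fmc unfolding S1_def S2_def S3_def S4_def by auto
  have "card (M c) \<le> card (S1 \<union> S2 \<union> S3 \<union> S4)" by (rule card_mono) (use fS cov in auto)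
  also have "\<dots> \<le> card S1 + card S2 + card S3 + card S4"
    by (metis (no_types, lifting) add_le_mono card_Un_le le_trans add_le_mono1)
  finally have cM: "card (M c) \<le> card S1 + card S2 + card S3 + card S4" .
  have fSucc: "finite (Succ G c)" unfolding Succ_def using Ffin by auto
  have "card S1 \<le> card (VB F)" unfolding S1_def by (rule bm_card_snd[OF bmc fin_VB[OF Ffin]])
  also have "\<dots> \<le> card F" by (rule card_VB[OF Ffin])
  finally have 1: "card S1 \<le> card F" .
  have fX: "finite (XX G)" unfolding XX_def using fG fin_VB by auto
  have "card S2 \<le> card (XX G)" unfolding S2_def by (rule bm_card_snd[OF bmc fX])
  also have "\<dots> \<le> card (F - G)" by (rule XX_card[OF v])
  finally have 2: "card S2 \<le> j" using j by linarith
  have "card S3 \<le> card (VA (F - G))" unfolding S3_def by (rule bm_card_fst[OF bmc fin_VA]) (use Ffin in auto)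
  also have "\<dots> \<le> card (F - G)" by (rule card_VA) (use Ffin in auto)
  finally have 3: "card S3 \<le> j" using j by linarith
  have "card S4 \<le> card (VA (Succ G c))" unfolding S4_def by (rule bm_card_fst[OF bmc fin_VA[OF fSucc]])
  also have "\<dots> \<le> card (Succ G c)" by (rule card_VA[OF fSucc])
  finally have 4: "card S4 \<le> card (Succ G c)" .
  have "card (M c) \<le> card F + 2 * j + card (Succ G c)" using cM 1 2 3 4 by linarith
  then have "real (card (M c)) \<le> real (card F) + 2 * real j + real (card (Succ G c))" by linarith
  then show ?thesis using Lb[OF c] by linarith
qed

lemma count_Z:
  assumes v: "valid G" and f: "free G c" and d: "card (F - G) \<le> d" and Z: "Z \<subseteq> VB F"
    and blk: "\<forall>e\<in>M c. snd e \<in> Z \<longrightarrow> fst e \<in> VA F"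
  shows "L \<le> 2 * real (card F) - real (card Z) + real d"
proof -
  have c: "c \<in> {1..n}" using f unfolding free_def by auto
  have bmc: "bip_matching A B (M c)" and fmc: "finite (M c)" using bm[OF c] fin[OF c] by auto
  have fG: "finite G" using v unfolding valid_def by auto
  define S1 where "S1 = {e\<in>M c. fst e \<in> VA F}"
  define S2 where "S2 = {e\<in>M c. snd e \<in> VB F - Z}"
  define S3 where "S3 = {e\<in>M c. snd e \<in> XX G}"
  have cov: "M c \<subseteq> S1 \<union> S2 \<union> S3"
  proof
    fix e assume e: "e \<in> M c"
    show "e \<in> S1 \<union> S2 \<union> S3"
    proof (cases "fst e \<in> VA F")
      case True then show ?thesis using e unfolding S1_def by auto
    next
      case False
      then have nG: "fst e \<notin> VA G" using VA_sub[OF v] by blast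
      show ?thesis
      proof (cases "snd e \<in> VB F")
        case True
        then have "snd e \<notin> Z" using blk e False by blast
        then show ?thesis using True e unfolding S2_def by auto
      next
        case False
        have "snd e \<in> VB G" using touch[OF v f e] nG by blast
        then have "snd e \<in> XX G" using VB_sub[OF v] False by blast
        then show ?thesis using e unfolding S3_def by auto
      qed
    qed
  qed
  have fS: "finite S1" "finite S2" "finite S3" using fmc unfolding S1_def S2_def S3_def by auto
  have "card (M c) \<le> card (S1 \<union> S2 \<union> S3)" by (rule card_mono) (use fS cov in auto)
  also have "\<dots> \<le> card S1 + card S2 + card S3"
    by (metis (no_types, lifting) add_le_mono card_Un_le le_trans add_le_mono1)
  finally have cM: "card (M c) \<le> card S1 + card S2 + card S3" .
  have "card S1 \<le> card (VA F)" unfolding S1_def by (rule bm_card_fst[OF bmc fin_VA[OF Ffin]])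
  also have "\<dots> \<le> card F" by (rule card_VA[OF Ffin])
  finally have 1: "card S1 \<le> card F" .
  have fZ: "finite Z" using Z fin_VB[OF Ffin] finite_subset by blast
  have "card S2 \<le> card (VB F - Z)" unfolding S2_def by (rule bm_card_snd[OF bmc]) (use fin_VB[OF Ffin] in auto)
  also have "\<dots> = card (VB F) - card Z" using Z fZ by (simp add: card_Diff_subset)
  finally have 2: "card S2 + card Z \<le> card F" using card_VB[OF Ffin] card_mono[OF fin_VB[OF Ffin] Z] by linarith
  have fX: "finite (XX G)" unfolding XX_def using fG fin_VB by auto
  have "card S3 \<le> card (XX G)" unfolding S3_def by (rule bm_card_snd[OF bmc fX])
  also have "\<dots> \<le> card (F - G)" by (rule XX_card[OF v])
  finally have 3: "card S3 \<le> d" using d by linarith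
  have "card (M c) + card Z \<le> 2 * card F + d" using cM 1 2 3 by linarith
  then have "real (card (M c)) + real (card Z) \<le> 2 * real (card F) + real d" by linarith
  then show ?thesis using Lb[OF c] by linarith
qed


lemma P_sub: "P j \<subseteq> F \<times> F" unfolding P_def by auto
lemma H_sub: "H j \<subseteq> F" unfolding H_def by auto

lemma P_lower: "real (card (H j)) * (L - real (card F) - 2 * real j) \<le> real (card (P j))"
proof -
  define Sc where "Sc h = {g. (h,g) \<in> P j}" for h
  have eq: "P j = (SIGMA h:F. Sc h)" using P_sub unfolding Sc_def by auto
  have fSc: "\<forall>h\<in>F. finite (Sc h)" using P_sub Ffin unfolding Sc_def
    by (auto intro: finite_subset[of _ F])
  have "card (P j) = (\<Sum>h\<in>F. card (Sc h))" unfolding eq using Ffin fSc by (rule card_SigmaI)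
  then have c: "real (card (P j)) = (\<Sum>h\<in>F. real (card (Sc h)))" by simp
  have lb: "L - real (card F) - 2 * real j \<le> real (card (Sc h))" if h: "h \<in> H j" for h
  proof -
    obtain G where G: "valid G" "free G (fst h)" "card (F - G) \<le> j" using h unfolding H_def by auto
    have hF: "h \<in> F" using h unfolding H_def by auto
    have "Succ G (fst h) \<subseteq> Sc h" unfolding Sc_def P_def using G hF
      by (auto simp: Succ_def)
    then have "card (Succ G (fst h)) \<le> card (Sc h)" using fSc hF by (simp add: card_mono)
    then show ?thesis using count_ext[OF G] by linarith
  qed
  have "real (card (H j)) * (L - real (card F) - 2 * real j) = (\<Sum>h\<in>H j. (L - real (card F) - 2 * real j))"
    by simp
  also have "\<dots> \<le> (\<Sum>h\<in>H j. real (card (Sc h)))" by (rule sum_mono) (rule lb)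
  also have "\<dots> \<le> (\<Sum>h\<in>F. real (card (Sc h)))"
    by (rule sum_mono2) (use Ffin H_sub in auto)
  finally show ?thesis using c by simp
qed

lemma pred_step:
  assumes "(h,g) \<in> P j"
  shows "\<exists>G'. valid G' \<and> free G' (fst g) \<and> card (F - G') \<le> Suc j \<and> h \<in> F - G'"
proof -
  obtain G where G: "valid G" "free G (fst h)" "card (F - G) \<le> j" "g \<in> Succ G (fst h)" and hF: "h \<in> F"
    using assms unfolding P_def by auto
  obtain e where e: "e \<in> M (fst h)" "fst e = fst (snd g)" "snd e \<notin> VB F" "snd e \<notin> XX G"
    and g: "g \<in> F" "g \<in> G" using G(4) unfolding Succ_def by auto
  define G' where "G' = insert (fst h, e) (G - {g})"
  have x: "valid G' \<and> free G' (fst g) \<and> F - G' = insert g (F - G)"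
    unfolding G'_def by (rule ext[OF G(1,2) g e])
  have "card (F - G') \<le> Suc (card (F - G))" using x Ffin by (simp add: card_insert_if)
  moreover have "h \<notin> G" using G(2) unfolding free_def by force
  ultimately show ?thesis using x G(3) hF by (intro exI[of _ G']) auto
qed

lemma pred_bound:
  assumes g: "g \<in> H (Suc j)"
  shows "real (card {h. (h,g) \<in> P j}) \<le> 2 * real (card F) - L + real (Suc j)"
proof -
  obtain G0 where G0: "valid G0" "free G0 (fst g)" "card (F - G0) \<le> Suc j" using g unfolding H_def by auto
  define Pr where "Pr = {h. (h,g) \<in> P j}"
  have PrF: "Pr \<subseteq> F" using P_sub unfolding Pr_def by auto
  define Z where "Z = (\<lambda>h. snd (snd h)) ` Pr"
  have Z: "Z \<subseteq> VB F" unfolding Z_def VB_def using PrF by auto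
  have inj: "inj_on (\<lambda>h. snd (snd h)) Pr" using rm_inj3[OF Frm] PrF unfolding inj_on_def by blast
  have cZ: "card Z = card Pr" unfolding Z_def using inj by (rule card_image)
  have blk: "\<forall>e\<in>M (fst g). snd e \<in> Z \<longrightarrow> fst e \<in> VA F"
  proof (intro ballI impI)
    fix e assume e: "e \<in> M (fst g)" "snd e \<in> Z"
    then obtain h where h: "h \<in> Pr" "snd e = snd (snd h)" unfolding Z_def by auto
    obtain G' where G': "valid G'" "free G' (fst g)" "h \<in> F - G'"
      using pred_step[of h g j] h(1) unfolding Pr_def by auto
    have "snd e \<notin> VB G'" using exposed[OF G'(1)] G'(3) h(2) by auto
    then have "fst e \<in> VA G'" using touch[OF G'(1,2) e(1)] by blast
    then show "fst e \<in> VA F" using VA_sub[OF G'(1)] by blast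
  qed
  have "L \<le> 2 * real (card F) - real (card Z) + real (Suc j)" by (rule count_Z[OF G0 Z blk])
  then show ?thesis using cZ unfolding Pr_def by simp
qed

lemma P_upper: "real (card (P j)) \<le> real (card (H (Suc j))) * (2 * real (card F) - L + real (Suc j))"
proof -
  define Pr where "Pr g = {h. (h,g) \<in> P j}" for g
  have eq: "prod.swap ` P j = (SIGMA g:F. Pr g)" using P_sub unfolding Pr_def by force
  have fPr: "\<forall>g\<in>F. finite (Pr g)" using P_sub Ffin unfolding Pr_def
    by (auto intro: finite_subset[of _ F])
  have "card (P j) = card (prod.swap ` P j)" by (simp add: card_image)
  also have "\<dots> = (\<Sum>g\<in>F. card (Pr g))" unfolding eq using Ffin fPr by (rule card_SigmaI)
  finally have c: "real (card (P j)) = (\<Sum>g\<in>F. real (card (Pr g)))" by simp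
  have z: "Pr g = {}" if "g \<in> F - H (Suc j)" for g
  proof (rule ccontr)
    assume "Pr g \<noteq> {}"
    then obtain h where "(h,g) \<in> P j" unfolding Pr_def by auto
    from pred_step[OF this] have "g \<in> H (Suc j)" using that unfolding H_def by auto
    then show False using that by auto
  qed
  have "(\<Sum>g\<in>F. real (card (Pr g))) = (\<Sum>g\<in>H (Suc j). real (card (Pr g)))"
    by (rule sum.mono_neutral_right) (use Ffin H_sub z in auto)
  also have "\<dots> \<le> (\<Sum>g\<in>H (Suc j). 2 * real (card F) - L + real (Suc j))"
    by (rule sum_mono) (use pred_bound in \<open>auto simp: Pr_def\<close>)
  also have "\<dots> = real (card (H (Suc j))) * (2 * real (card F) - L + real (Suc j))" by simp
  finally show ?thesis using c by simp
qed


lemma key: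
  assumes c0: "c0 \<in> {1..n}" "c0 \<notin> fst ` F"
  shows "L \<le> 2 * real (card F)" "real (card (H 1)) \<ge> L - real (card F)"
    "real (card (H 3)) \<le> real (card F)"
    "\<And>j. real (card (H j)) * (L - real (card F) - 2 * real j)
       \<le> real (card (H (Suc j))) * (2 * real (card F) - L + real (Suc j))"
proof -
  have fr: "free F c0" using c0 unfolding free_def by auto
  have "L \<le> 2 * real (card F) - real (card ({}::'v set)) + real 0"
    by (rule count_Z[OF valid_F fr]) auto
  then show "L \<le> 2 * real (card F)" by simp
  have sub: "Succ F c0 \<subseteq> H 1"
  proof
    fix g assume g: "g \<in> Succ F c0"
    then obtain e where e: "e \<in> M c0" "fst e = fst (snd g)" "snd e \<notin> VB F" "snd e \<notin> XX F"
      and gF: "g \<in> F" unfolding Succ_def by auto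
    have x: "valid (insert (c0, e) (F - {g})) \<and> free (insert (c0, e) (F - {g})) (fst g) \<and>
       F - insert (c0, e) (F - {g}) = insert g (F - F)"
      by (rule ext[OF valid_F fr gF gF e])
    then show "g \<in> H 1" unfolding H_def using gF by (intro CollectI conjI exI[of _ "insert (c0, e) (F - {g})"]) auto
  qed
  have "L - real (card F) - 2 * real 0 \<le> real (card (Succ F c0))"
    by (rule count_ext[OF valid_F fr]) simp
  moreover have "card (Succ F c0) \<le> card (H 1)"
    by (rule card_mono[OF _ sub]) (use Ffin H_sub finite_subset in blast)
  ultimately show "real (card (H 1)) \<ge> L - real (card F)" by simp
  show "real (card (H 3)) \<le> real (card F)" using card_mono[OF Ffin H_sub] by simp
  fix j
  show "real (card (H j)) * (L - real (card F) - 2 * real j)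
       \<le> real (card (H (Suc j))) * (2 * real (card F) - L + real (Suc j))"
    using P_lower[of j] P_upper[of j] by linarith
qed

end


theorem mainTheorem3:
  fixes n :: nat and A B :: "'v set" and M :: "nat \<Rightarrow> ('v \<times> 'v) set"
  assumes "n \<ge> 2"
    and "A \<inter> B = {}"
    and "\<And>i. i \<in> {1..n} \<Longrightarrow> bip_matching A B (M i)"
    and "\<And>i. i \<in> {1..n} \<Longrightarrow> finite (M i)"
    and "\<And>i. i \<in> {1..n} \<Longrightarrow>
           real (card (M i)) \<ge> golden_ratio * real n + 20 * real n / ln (real n)"
  shows "\<exists>R. rainbow_matching {1..n} M R \<and> finite R \<and> card R = n"
proof (rule ccontr)
  assume no: "\<not> ?thesis"
  define Q where "Q R \<longleftrightarrow> rainbow_matching {1..n} M R \<and> finite R" for R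
  have Q0: "Q {}" unfolding Q_def rainbow_matching_def by auto
  have Qb: "\<forall>R. Q R \<longrightarrow> card R < Suc n"
  proof (intro allI impI)
    fix R assume "Q R"
    then have "card R \<le> n" using rm_card[of n M R] unfolding Q_def by blast
    then show "card R < Suc n" by simp
  qed
  obtain F where F: "Q F" and Fmax: "\<forall>R. Q R \<longrightarrow> card R \<le> card F"
    using ex_has_greatest_nat[OF Q0 Qb] by blast
  have Frm: "rainbow_matching {1..n} M F" and Ffin: "finite F" using F unfolding Q_def by auto
  have "card F \<le> n" using rm_card[OF Frm] by simp
  moreover have "card F \<noteq> n" using no Frm Ffin by blast
  ultimately have kn: "card F < n" by simp
  have "card (fst ` F) \<le> card F" using Ffin by (rule card_image_le)
  then have "card (fst ` F) < card {1..n}" using kn by simp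
  then have "\<not> {1..n} \<subseteq> fst ` F" using Ffin by (meson card_mono finite_imageI not_le)
  then obtain c0 where c0: "c0 \<in> {1..n}" "c0 \<notin> fst ` F" by blast
  define L where "L = golden_ratio * real n + 20 * real n / ln (real n)"
  interpret setting n M A B F L
    by (unfold_locales) (use assms(3,4,5) Frm Ffin Fmax in \<open>auto simp: Q_def L_def\<close>)
  note K = key[OF c0]
  have k1: "real (card F) \<le> real n - 1" using kn by linarith
  have n2: "real n \<ge> 2" using assms(1) by simp
  have phi: "golden_ratio \<ge> (809/500)" unfolding golden_ratio_def by (rule phi_ge)
  have lnp: "ln (real n) > 0" using n2 by simp
  have t0: "20 * real n / ln (real n) \<ge> 0" using lnp n2 by simp
  have gn: "(809/500) * real n \<le> golden_ratio * real n" using phi n2 by (intro mult_right_mono) auto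
  have L1: "L \<ge> (809/500) * real n" unfolding L_def using gn t0 by linarith
  show False
  proof (cases "real n < 1000")
    case True
    have "20 * real n / ln (real n) \<ge> (7/10) * real n" by (rule small_n[OF n2 True])
    then have "L > 2 * real n" using gn n2 unfolding L_def by linarith
    then show False using K(1) k1 n2 by linarith
  next
    case False
    have s1: "real (card (H 1)) * (L - real (card F) - 2) \<le> real (card (H 2)) * (2 * real (card F) - L + 2)"
      using K(4)[of 1] by (simp add: numeral_2_eq_2)
    have s2: "real (card (H 2)) * (L - real (card F) - 4) \<le> real (card (H 3)) * (2 * real (card F) - L + 3)"
      using K(4)[of 2] by (simp add: numeral_3_eq_3)
    show False
      by (rule numeric_big[of "real n" "real (card F)" L "real (card (H 1))" "real (card (H 2))" "real (card (H 3))"])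
        (use False k1 L1 K(1,2,3) s1 s2 in \<open>simp_all\<close>)
  qed
qed

end
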